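(* In the construction described in the context, for every $i\in\{1,\dots,t-1\}$ we have $C_i\subseteq F$.
   Context: Setting: $G=(V,E)$ is a connected finite undirected graph (parallel edges allowed), $w:E\to\mathbb{R}_{\ge0}$ edge weights, $c:E\to\mathbb{R}_{>0}$ edge costs, $n=|V|$. For $S\subseteq V$, $C_G(S)=\{e\in E:|e\cap S|=1\}$ (complete cut; its edges cross it) and $C_G(S,W)=\{e\in C_G(S):w(e)<W\}$ (partial cut). $F\subseteq E$ is a set with $G'=G\setminus F=(V,E\setminus F)$ connected; $B=c(F)$ and $\Delta=\mathrm{MST}(G')-\mathrm{MST}(G)$ (MST weights w.r.t. $w$). Construction: let $T$ be a minimum spanning tree of $G$ and $T\cap F=\{e_1,\dots,e_{t-1}\}$, with $t\ge2$. Removing these edges splits $T$ into components with vertex sets $A_1,\dots,A_t$ (a partition of $V$). Let $G'_{cc}$ be the multigraph with vertex set $V_{cc}=\{A_1,\dots,A_t\}$ having, for every edge $\{u,v\}\in E\setminus F$ with $u\in A_i$, $v\in A_j$, an edge between $A_i$ and $A_j$ of weight $w(\{u,v\})$ (identified with the original edge). Let $T'_{cc}$ be a minimum spanning tree of $G'_{cc}$, with edges $e'_1,\dots,e'_{t-1}$ indexed so that $w(e'_1)\le\dots\le w(e'_{t-1})$ (ties broken arbitrarily). For each $i$, deleting $e'_i,e'_{i+1},\dots,e'_{t-1}$ from $T'_{cc}$ leaves a forest in which $e'_i$ joins two components $L_i,R_i\subseteq V_{cc}$. Counters $k(A)=0$ for all $A\in V_{cc}$ initially, and $k(S)=\max_{A\in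 S}k(A)$. For $i=1,\dots,t-1$ in order: set $X_i=L_i$ if $k(L_i)\le k(R_i)$, else $X_i=R_i$; then increase $k(A)$ by $1$ for every $A\in X_i$. Identifying a set of vertices of $G'_{cc}$ with the union of the corresponding vertex sets in $V$, define $C_i=C_G(X_i,w(e'_i))$. *)

theory Defs
  imports Complex_Main
begin

text \<open>Multigraphs: vertex set V, edge identifiers E, endpoint map ep
  (an undirected edge e has endpoint set {fst (ep e), snd (ep e)}).\<close>

definition edge_rel :: "'e set \<Rightarrow> ('e \<Rightarrow> 'v \<times> 'v) \<Rightarrow> ('v \<times> 'v) set" where
  "edge_rel E ep = {(fst (ep e), snd (ep e)) | e. e \<in> E} \<union> {(snd (ep e), fst (ep e)) | e. e \<in> E}"

definition reach :: "'e set \<Rightarrow> ('e \<Rightarrow> 'v \<times> 'v) \<Rightarrow> 'v \<Rightarrow> 'v \<Rightarrow> bool" where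
  "reach E ep u v \<longleftrightarrow> (u, v) \<in> (edge_rel E ep)\<^sup>*"

definition graph_connected :: "'v set \<Rightarrow> 'e set \<Rightarrow> ('e \<Rightarrow> 'v \<times> 'v) \<Rightarrow> bool" where
  "graph_connected V E ep \<longleftrightarrow> (\<forall>u\<in>V. \<forall>v\<in>V. reach E ep u v)"

definition is_forest :: "'e set \<Rightarrow> ('e \<Rightarrow> 'v \<times> 'v) \<Rightarrow> bool" where
  "is_forest T ep \<longleftrightarrow> (\<forall>e\<in>T. \<not> reach (T - {e}) ep (fst (ep e)) (snd (ep e)))"

definition spanning_tree :: "'v set \<Rightarrow> 'e set \<Rightarrow> ('e \<Rightarrow> 'v \<times> 'v) \<Rightarrow> 'e set \<Rightarrow> bool" where
  "spanning_tree V E ep T \<longleftrightarrow> T \<subseteq> E \<and> graph_connected V T ep \<and> is_forest T ep"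

definition is_MST :: "'v set \<Rightarrow> 'e set \<Rightarrow> ('e \<Rightarrow> 'v \<times> 'v) \<Rightarrow> ('e \<Rightarrow> real) \<Rightarrow> 'e set \<Rightarrow> bool" where
  "is_MST V E ep w T \<longleftrightarrow> spanning_tree V E ep T \<and>
     (\<forall>T'. spanning_tree V E ep T' \<longrightarrow> sum w T \<le> sum w T')"

text \<open>Well-formed finite multigraph (parallel edges allowed, no loops).\<close>
definition multigraph :: "'v set \<Rightarrow> 'e set \<Rightarrow> ('e \<Rightarrow> 'v \<times> 'v) \<Rightarrow> bool" where
  "multigraph V E ep \<longleftrightarrow> finite V \<and> finite E \<and>
     (\<forall>e\<in>E. fst (ep e) \<in> V \<and> snd (ep e) \<in> V \<and> fst (ep e) \<noteq> snd (ep e))"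

definition complete_cut :: "'e set \<Rightarrow> ('e \<Rightarrow> 'v \<times> 'v) \<Rightarrow> 'v set \<Rightarrow> 'e set" where
  "complete_cut E ep S = {e \<in> E. card ({fst (ep e), snd (ep e)} \<inter> S) = 1}"

definition partial_cut :: "'e set \<Rightarrow> ('e \<Rightarrow> 'v \<times> 'v) \<Rightarrow> ('e \<Rightarrow> real) \<Rightarrow> 'v set \<Rightarrow> real \<Rightarrow> 'e set" where
  "partial_cut E ep w S W = {e \<in> complete_cut E ep S. w e < W}"

definition comp_of :: "'v set \<Rightarrow> 'e set \<Rightarrow> ('e \<Rightarrow> 'v \<times> 'v) \<Rightarrow> 'v \<Rightarrow> 'v set" where
  "comp_of V T ep u = {v \<in> V. reach T ep u v}"

definition kmax :: "('a \<Rightarrow> nat) \<Rightarrow> 'a set \<Rightarrow> nat" where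
  "kmax k S = Max (k ` S)"

text \<open>Counter process: L i, R i are the two sides at step i (0-based).
  counters L R i is the counter function before step i.\<close>
primrec counters :: "(nat \<Rightarrow> 'a set) \<Rightarrow> (nat \<Rightarrow> 'a set) \<Rightarrow> nat \<Rightarrow> 'a \<Rightarrow> nat" where
  "counters L R 0 = (\<lambda>A. 0)"
| "counters L R (Suc i) =
     (let k = counters L R i;
          X = (if kmax k (L i) \<le> kmax k (R i) then L i else R i)
      in (\<lambda>A. if A \<in> X then k A + 1 else k A))"

definition Xsel :: "(nat \<Rightarrow> 'a set) \<Rightarrow> (nat \<Rightarrow> 'a set) \<Rightarrow> nat \<Rightarrow> 'a set" where
  "Xsel L R i = (let k = counters L R i in
                   if kmax k (L i) \<le> kmax k (R i) then L i else R i)"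

end

theory Submission
  imports Defs
begin


lemma edge_rel_iff: "(x,y) \<in> edge_rel S ep \<longleftrightarrow> (\<exists>e\<in>S. ep e = (x,y) \<or> ep e = (y,x))"
  unfolding edge_rel_def by (auto simp: prod_eq_iff)

lemma reach_refl: "reach S ep u u"
  unfolding reach_def by simp

lemma reach_sym: assumes "reach S ep u v" shows "reach S ep v u"
proof -
  have "(u,v) \<in> (edge_rel S ep)\<^sup>*" using assms unfolding reach_def .
  then show ?thesis unfolding reach_def
  proof (induction rule: rtrancl_induct)
    case base then show ?case by simp
  next
    case (step y z)
    have "(z,y) \<in> edge_rel S ep" using step(2) edge_rel_iff by metis
    then show ?case using step(3) by (rule converse_rtrancl_into_rtrancl)
  qed
qed

lemma reach_trans: "reach S ep u v \<Longrightarrow> reach S ep v z \<Longrightarrow> reach S ep u z"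
  unfolding reach_def by (rule rtrancl_trans)

lemma edge_rel_mono: "S \<subseteq> S' \<Longrightarrow> edge_rel S ep \<subseteq> edge_rel S' ep"
  unfolding edge_rel_def by blast

lemma reach_mono: "S \<subseteq> S' \<Longrightarrow> reach S ep u v \<Longrightarrow> reach S' ep u v"
  unfolding reach_def using rtrancl_mono[OF edge_rel_mono] by blast

lemma reach_edge: "e \<in> S \<Longrightarrow> ep e = (x,y) \<or> ep e = (y,x) \<Longrightarrow> reach S ep x y"
  unfolding reach_def by (rule r_into_rtrancl) (auto simp: edge_rel_iff)

lemma reach_del:
  assumes "reach S ep u v" "h \<in> S" "ep h = (x,y) \<or> ep h = (y,x)"
  shows "reach (S-{h}) ep u v \<or> reach (S-{h}) ep x v \<or> reach (S-{h}) ep y v"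
proof -
  have "(u,v) \<in> (edge_rel S ep)\<^sup>*" using assms(1) unfolding reach_def .
  then show ?thesis
  proof (induction rule: rtrancl_induct)
    case base then show ?case by (simp add: reach_refl)
  next
    case (step z z')
    obtain g where g: "g \<in> S" "ep g = (z,z') \<or> ep g = (z',z)" using step(2) edge_rel_iff by metis
    show ?case
    proof (cases "g = h")
      case True
      then have "z' = x \<or> z' = y" using g(2) assms(3) by auto
      then show ?thesis using reach_refl[of "S-{h}" ep x] reach_refl[of "S-{h}" ep y] by blast
    next
      case False
      then have "(z,z') \<in> edge_rel (S-{h}) ep" using g unfolding edge_rel_iff by blast
      then show ?thesis using step(3) unfolding reach_def by (meson rtrancl_into_rtrancl)
    qed
  qed
qed

lemma first_cross:
  assumes "reach S ep a b" "a \<in> X" "b \<notin> X"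
  shows "\<exists>h\<in>S. \<exists>x y. (ep h = (x,y) \<or> ep h = (y,x)) \<and> x \<in> X \<and> y \<notin> X \<and> reach S ep a x \<and> reach S ep y b"
proof -
  have "(a,b) \<in> (edge_rel S ep)\<^sup>*" using assms(1) unfolding reach_def .
  then show ?thesis using assms(3)
  proof (induction rule: rtrancl_induct)
    case base then show ?case using assms(2) by simp
  next
    case (step z b')
    obtain g where g: "g \<in> S" "ep g = (z,b') \<or> ep g = (b',z)" using step(2) edge_rel_iff by metis
    show ?case
    proof (cases "z \<in> X")
      case True
      then show ?thesis using g step(1,4) reach_refl unfolding reach_def by blast
    next
      case False
      then obtain h x y where "h \<in> S" "ep h = (x,y) \<or> ep h = (y,x)" "x \<in> X" "y \<notin> X" "reach S ep a x" "reach S ep y z"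
        using step(3) by blast
      moreover have "reach S ep y b'" using calculation(6) step(2) unfolding reach_def by (meson rtrancl_into_rtrancl)
      ultimately show ?thesis by blast
    qed
  qed
qed

lemma cross_lemma:
  assumes "finite S" "reach S ep a b" "a \<in> X" "b \<notin> X"
  shows "\<exists>h\<in>S. \<exists>x y. (ep h = (x,y) \<or> ep h = (y,x)) \<and> x \<in> X \<and> y \<notin> X \<and> reach (S-{h}) ep a x \<and> reach (S-{h}) ep y b"
  using assms
proof (induction "card S" arbitrary: S a b rule: less_induct)
  case less
  obtain h0 x0 y0 where h0: "h0 \<in> S" "ep h0 = (x0,y0) \<or> ep h0 = (y0,x0)" "x0 \<in> X" "y0 \<notin> X"
    "reach S ep a x0" "reach S ep y0 b" using first_cross[OF less.prems(2-4)] by blast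
  let ?S = "S - {h0}"
  have fin: "finite ?S" using less.prems(1) by simp
  have card: "card ?S < card S" using less.prems(1) h0(1) by (rule card_Diff1_less)
  have IH: "\<And>a b. reach ?S ep a b \<Longrightarrow> a \<in> X \<Longrightarrow> b \<notin> X \<Longrightarrow> \<exists>h\<in>?S. \<exists>x y. (ep h = (x,y) \<or> ep h = (y,x)) \<and> x \<in> X \<and> y \<notin> X \<and> reach (?S-{h}) ep a x \<and> reach (?S-{h}) ep y b"
    using less.hyps[OF card fin] by blast
  show ?case
  proof (cases "reach ?S ep a b")
    case True
    then obtain h x y where hxy: "h \<in> ?S" "ep h = (x,y) \<or> ep h = (y,x)" "x \<in> X" "y \<notin> X"
      "reach (?S-{h}) ep a x" "reach (?S-{h}) ep y b" using IH less.prems(3,4) by blast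
    have sub: "?S - {h} \<subseteq> S - {h}" by blast
    have r1: "reach (S-{h}) ep a x" using reach_mono[OF sub hxy(5)] .
    have r2: "reach (S-{h}) ep y b" using reach_mono[OF sub hxy(6)] .
    have hS: "h \<in> S" using hxy(1) by simp
    show ?thesis
      by (rule bexI[OF _ hS], rule exI[of _ x], rule exI[of _ y]) (simp add: hxy(2-4) r1 r2)
  next
    case False
    have A: "reach ?S ep x0 a \<or> reach ?S ep y0 a"
      using reach_del[OF reach_sym[OF h0(5)] h0(1) h0(2)] by blast
    have h0': "ep h0 = (y0,x0) \<or> ep h0 = (x0,y0)" using h0(2) by blast
    have B: "reach ?S ep y0 b \<or> reach ?S ep x0 b"
      using reach_del[OF h0(6) h0(1) h0'] by blast
    show ?thesis
    proof (cases "reach ?S ep x0 a")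
      case True
      then have "reach ?S ep y0 b" using B False reach_trans[OF reach_sym[OF True]] by blast
      then have r2: "reach (S-{h0}) ep y0 b" .
      have r1: "reach (S-{h0}) ep a x0" using reach_sym[OF True] .
      show ?thesis
        by (rule bexI[OF _ h0(1)], rule exI[of _ x0], rule exI[of _ y0]) (simp add: h0(2-4) r1 r2)
    next
      case F1: False
      then have ya: "reach ?S ep y0 a" using A by blast
      then have xb: "reach ?S ep x0 b" using B False reach_trans[OF reach_sym[OF ya]] by blast
      obtain h1 x1 y1 where h1: "h1 \<in> ?S" "ep h1 = (x1,y1) \<or> ep h1 = (y1,x1)" "x1 \<in> X" "y1 \<notin> X"
        "reach (?S-{h1}) ep a x1" "reach (?S-{h1}) ep y1 y0"
        using IH[OF reach_sym[OF ya] less.prems(3) h0(4)] by blast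
      have sub: "?S - {h1} \<subseteq> S - {h1}" by blast
      have C: "reach (?S-{h1}) ep x0 b \<or> reach (?S-{h1}) ep x1 b \<or> reach (?S-{h1}) ep y1 b"
        using reach_del[OF xb h1(1) h1(2)] .
      have "reach (S-{h1}) ep y1 b"
      proof -
        consider "reach (?S-{h1}) ep x0 b" | "reach (?S-{h1}) ep x1 b" | "reach (?S-{h1}) ep y1 b"
          using C by blast
        then show ?thesis
        proof cases
          case 1
          have "h0 \<in> S - {h1}" using h0(1) h1(1) by blast
          then have e0: "reach (S-{h1}) ep y0 x0" using h0' by (rule reach_edge[of h0 "S-{h1}" ep y0 x0])
          show ?thesis using reach_trans[OF reach_trans[OF reach_mono[OF sub h1(6)] e0] reach_mono[OF sub 1]] .
        next
          case 2
          have "reach ?S ep a b" using reach_mono[of "?S-{h1}" ?S, OF _ reach_trans[OF h1(5) 2]] by blast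
          then show ?thesis using False by blast
        next
          case 3 then show ?thesis using reach_mono[OF sub 3] by simp
        qed
      qed
      moreover have "h1 \<in> S" using h1(1) by simp
      moreover have "reach (S-{h1}) ep a x1" using reach_mono[OF sub h1(5)] .
      ultimately show ?thesis
        by (intro bexI[of _ h1] exI[of _ x1] exI[of _ y1]) (simp add: h1(2-4))
    qed
  qed
qed

lemma contains_forest:
  assumes "finite S" "graph_connected V S ep"
  shows "\<exists>T'\<subseteq>S. graph_connected V T' ep \<and> is_forest T' ep"
  using assms
proof (induction "card S" arbitrary: S rule: less_induct)
  case less
  show ?case
  proof (cases "is_forest S ep")
    case True then show ?thesis using less.prems by blast
  next
    case False
    then obtain g where g: "g \<in> S" "reach (S-{g}) ep (fst (ep g)) (snd (ep g))"
      unfolding is_forest_def by blast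
    have sub: "edge_rel S ep \<subseteq> (edge_rel (S-{g}) ep)\<^sup>*"
    proof
      fix p assume p: "p \<in> edge_rel S ep"
      obtain x y where pxy: "p = (x,y)" by (cases p)
      then obtain e where e: "e \<in> S" "ep e = (x,y) \<or> ep e = (y,x)" using p edge_rel_iff by metis
      show "p \<in> (edge_rel (S-{g}) ep)\<^sup>*"
      proof (cases "e = g")
        case True
        then have "reach (S-{g}) ep x y" using g(2) e(2) reach_sym[of "S-{g}" ep y x] by auto
        then show ?thesis using pxy unfolding reach_def by simp
      next
        case False
        then have "reach (S-{g}) ep x y" using e by (intro reach_edge[of e]) auto
        then show ?thesis using pxy unfolding reach_def by simp
      qed
    qed
    have conn: "graph_connected V (S-{g}) ep" using less.prems(2) sub
      unfolding graph_connected_def reach_def by (meson rtrancl_subset_rtrancl subsetD)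
    have card: "card (S-{g}) < card S" using less.prems(1) g(1) by (rule card_Diff1_less)
    obtain T' where "T' \<subseteq> S - {g}" "graph_connected V T' ep" "is_forest T' ep"
      using less.hyps[OF card _ conn] less.prems(1) by auto
    then show ?thesis by blast
  qed
qed



theorem mainTheorem8:
  fixes V :: "'v set" and E :: "'e set" and ep :: "'e \<Rightarrow> 'v \<times> 'v"
    and w :: "'e \<Rightarrow> real" and F T Tc :: "'e set" and es :: "'e list"
  defines "Vcc \<equiv> comp_of V (T - F) ep ` V"
    and "epc \<equiv> (\<lambda>e. (comp_of V (T - F) ep (fst (ep e)), comp_of V (T - F) ep (snd (ep e))))"
  defines "L \<equiv> (\<lambda>i. {A \<in> Vcc. reach (set (take i es)) epc (fst (epc (es ! i))) A})"
    and "R \<equiv> (\<lambda>i. {A \<in> Vcc. reach (set (take i es)) epc (snd (epc (es ! i))) A})"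
  assumes graph: "multigraph V E ep"
    and conn: "graph_connected V E ep"
    and wnn: "\<forall>e\<in>E. w e \<ge> 0"
    and FE: "F \<subseteq> E"
    and connF: "graph_connected V (E - F) ep"
    and T_mst: "is_MST V E ep w T"
    and TF: "T \<inter> F \<noteq> {}"
    and Tc_mst: "is_MST Vcc (E - F) epc w Tc"
    and es_set: "set es = Tc" and es_dist: "distinct es"
    and es_sorted: "sorted (map w es)"
  shows "\<forall>i < length es. partial_cut E ep w (\<Union> (Xsel L R i)) (w (es ! i)) \<subseteq> F"
proof (intro allI impI subsetI)
  fix i e assume i: "i < length es"
    and eC: "e \<in> partial_cut E ep w (\<Union> (Xsel L R i)) (w (es ! i))"
  show "e \<in> F"
  proof (rule ccontr)
    assume eF: "e \<notin> F"
    define comp where "comp = comp_of V (T - F) ep"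
    define X where "X = Xsel L R i"
    have epc_eq: "\<And>g. epc g = (comp (fst (ep g)), comp (snd (ep g)))" by (simp add: epc_def comp_def)
    have Vcc_eq: "Vcc = comp ` V" by (simp add: Vcc_def comp_def)
    have comp_self: "\<And>u. u \<in> V \<Longrightarrow> u \<in> comp u"
      unfolding comp_def comp_of_def using reach_refl by fastforce
    have comp_mem: "A = comp v" if AV: "A \<in> Vcc" and vA: "v \<in> A" for A v
    proof -
      obtain a where a: "a \<in> V" "A = comp a" using AV unfolding Vcc_eq by blast
      hence rav: "reach (T-F) ep a v" "v \<in> V" using vA by (auto simp: comp_def comp_of_def)
      show "A = comp v" unfolding a(2) comp_def comp_of_def
        by (auto intro: reach_trans[OF rav(1)] reach_trans[OF reach_sym[OF rav(1)]])
    qed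
    have X_cases: "X = L i \<or> X = R i" unfolding X_def Xsel_def Let_def by auto
    have XV: "X \<subseteq> Vcc" using X_cases by (auto simp: L_def R_def)
    have inX: "u \<in> \<Union>X \<longleftrightarrow> comp u \<in> X" if "u \<in> V" for u
    proof
      assume "u \<in> \<Union>X"
      then obtain A where A: "A \<in> X" "u \<in> A" by blast
      then have "A = comp u" using comp_mem XV by blast
      then show "comp u \<in> X" using A by simp
    next
      assume "comp u \<in> X"
      then show "u \<in> \<Union>X" using comp_self[OF that] by blast
    qed
    have epcV: "fst (epc g) \<in> Vcc \<and> snd (epc g) \<in> Vcc" if "g \<in> E" for g
      using graph that by (auto simp: multigraph_def epc_eq Vcc_eq)
    have closed: "B \<in> X" if "A \<in> X" "(A,B) \<in> edge_rel (set (take i es)) epc" "B \<in> Vcc" for A B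
      using X_cases that by (auto simp: L_def R_def reach_def intro: rtrancl_into_rtrancl)
    have Tc_st: "spanning_tree Vcc (E - F) epc Tc" and Tc_min: "\<And>T'. spanning_tree Vcc (E - F) epc T' \<Longrightarrow> sum w Tc \<le> sum w T'"
      using Tc_mst unfolding is_MST_def by auto
    have TcE: "Tc \<subseteq> E - F" and Tc_conn: "graph_connected Vcc Tc epc"
      using Tc_st unfolding spanning_tree_def by auto
    have heavy: "w (es ! i) \<le> w h" if h: "h \<in> Tc" "epc h = (x,y) \<or> epc h = (y,x)" "x \<in> X" "y \<notin> X" for h x y
    proof -
      obtain j where j: "j < length es" "h = es ! j" using es_set h(1) by (metis in_set_conv_nth)
      have "\<not> j < i"
      proof
        assume ji: "j < i"
        have "h \<in> set (take i es)" using j ji by (metis in_set_conv_nth length_take min_less_iff_conj nth_take)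
        then have "(x,y) \<in> edge_rel (set (take i es)) epc" using h(2) edge_rel_iff by metis
        moreover have "y \<in> Vcc" using epcV[of h] h(1,2) TcE by auto
        ultimately show False using closed h(3,4) by blast
      qed
      then have "map w es ! i \<le> map w es ! j" using es_sorted j(1) by (intro sorted_nth_mono) auto
      then show ?thesis using i j by simp
    qed
    have eE: "e \<in> E" and ecard: "card ({fst (ep e), snd (ep e)} \<inter> \<Union>X) = 1" and wlt: "w e < w (es ! i)"
      using eC unfolding partial_cut_def complete_cut_def X_def by auto
    define p where "p = fst (ep e)"
    define q where "q = snd (ep e)"
    have pV: "p \<in> V" and qV: "q \<in> V" and pq: "p \<noteq> q" using graph eE unfolding multigraph_def p_def q_def by auto
    have xor: "(p \<in> \<Union>X \<and> q \<notin> \<Union>X) \<or> (q \<in> \<Union>X \<and> p \<notin> \<Union>X)"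
    proof -
      have "card ({p,q} \<inter> \<Union>X) = 1" using ecard p_def q_def by simp
      then show ?thesis using pq by (cases "p \<in> \<Union>X"; cases "q \<in> \<Union>X") auto
    qed
    have epce: "epc e = (comp p, comp q)" using epc_eq[of e] p_def q_def by simp
    obtain a b where ab: "epc e = (a,b) \<or> epc e = (b,a)" "a \<in> X" "b \<notin> X"
    proof (cases "p \<in> \<Union>X")
      case True
      then have "comp p \<in> X" "comp q \<notin> X" using xor inX[OF pV] inX[OF qV] by auto
      then show ?thesis using that[of "comp p" "comp q"] epce by blast
    next
      case False
      then have "comp q \<in> X" "comp p \<notin> X" using xor inX[OF pV] inX[OF qV] by auto
      then show ?thesis using that[of "comp q" "comp p"] epce by blast
    qed
    have abV: "a \<in> Vcc" "b \<in> Vcc" using epcV[OF eE] ab(1) by auto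
    have rab: "reach Tc epc a b" using Tc_conn abV unfolding graph_connected_def by blast
    have finE: "finite E" using graph unfolding multigraph_def by auto
    have finTc: "finite Tc" using TcE finE finite_subset by blast
    obtain h x y where hxy: "h \<in> Tc" "epc h = (x,y) \<or> epc h = (y,x)" "x \<in> X" "y \<notin> X"
      "reach (Tc-{h}) epc a x" "reach (Tc-{h}) epc y b"
      using cross_lemma[OF finTc rab ab(2,3)] by blast
    have whe: "w (es ! i) \<le> w h" using heavy hxy(1-4) by blast
    have eTc: "e \<notin> Tc"
    proof
      assume "e \<in> Tc"
      then have "w (es ! i) \<le> w e" using heavy ab by blast
      then show False using wlt by simp
    qed
    define S' where "S' = insert e (Tc - {h})"
    have S'sub: "S' \<subseteq> E - F" using eE eF TcE unfolding S'_def by blast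
    have finS': "finite S'" using finTc unfolding S'_def by simp
    have sub1: "Tc - {h} \<subseteq> S'" unfolding S'_def by blast
    have rxy: "reach S' epc x y"
    proof -
      have "reach S' epc x a" using reach_sym[OF reach_mono[OF sub1 hxy(5)]] .
      moreover have "reach S' epc a b" using reach_edge[of e S' epc a b] ab(1) unfolding S'_def by blast
      moreover have "reach S' epc b y" using reach_sym[OF reach_mono[OF sub1 hxy(6)]] .
      ultimately show ?thesis using reach_trans by metis
    qed
    have sub: "edge_rel Tc epc \<subseteq> (edge_rel S' epc)\<^sup>*"
    proof
      fix pr assume pr: "pr \<in> edge_rel Tc epc"
      obtain u v where puv: "pr = (u,v)" by (cases pr)
      then obtain g where g: "g \<in> Tc" "epc g = (u,v) \<or> epc g = (v,u)" using pr edge_rel_iff by metis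
      have "reach S' epc u v"
      proof (cases "g = h")
        case True
        then have "(u,v) = (x,y) \<or> (u,v) = (y,x)" using g(2) hxy(2) by auto
        then show ?thesis using rxy reach_sym[OF rxy] by auto
      next
        case False
        then have "g \<in> S'" using g(1) unfolding S'_def by blast
        then show ?thesis using g(2) reach_edge by metis
      qed
      then show "pr \<in> (edge_rel S' epc)\<^sup>*" using puv unfolding reach_def by simp
    qed
    have conn': "graph_connected Vcc S' epc" using Tc_conn sub
      unfolding graph_connected_def reach_def by (meson rtrancl_subset_rtrancl subsetD)
    obtain T'' where T'': "T'' \<subseteq> S'" "graph_connected Vcc T'' epc" "is_forest T'' epc"
      using contains_forest[OF finS' conn'] by blast
    have "spanning_tree Vcc (E - F) epc T''" using T'' S'sub unfolding spanning_tree_def by blast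
    then have s1: "sum w Tc \<le> sum w T''" by (rule Tc_min)
    have s2: "sum w T'' \<le> sum w S'"
      using S'sub wnn by (intro sum_mono2[OF finS' T''(1)]) auto
    have s3: "sum w S' = w e + (sum w Tc - w h)"
      unfolding S'_def using finTc eTc hxy(1) by (simp add: sum_diff1)
    show False using s1 s2 s3 whe wlt by linarith
  qed
qed

end
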